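(* Let $\mathcal{D}_R$ be the class of all finite reflexive digraphs and let $D\in\mathcal{D}_R$. The class $\mathrm{Av}(D)=\{E\in\mathcal{D}_R: D\not\preceq E\}$, with respect to the homomorphic image ordering $\preceq$, is well quasi-ordered if and only if $D$ is isomorphic to $\overrightarrow{N}_{n,k}$ for some natural numbers $n,k$ with $2k<n$.
   Context: A digraph is a set $D$ with a binary relation $E(D)\subseteq D\times D$; reflexive means every loop $(x,x)$ is an edge. For $2k\le n$, $\overrightarrow{N}_{n,k}$ is the digraph on $\{1,\dots,n\}$ with edge set $\{(i,j):1\le i,j\le n\}\setminus\{(1,2),(3,4),\dots,(2k-1,2k)\}$. A homomorphism maps edges to edges. Homomorphic image ordering: $A\preceq B$ iff there is a surjective homomorphism $B\to A$. Well quasi-ordered means no infinite strictly decreasing sequence and no infinite antichain; digraphs considered up to isomorphism. *)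

theory Defs
  imports Main
begin

type_synonym 'a digraph = "'a set \<times> ('a \<times> 'a) set"

definition verts :: "'a digraph \<Rightarrow> 'a set" where "verts G = fst G"
definition edges :: "'a digraph \<Rightarrow> ('a \<times> 'a) set" where "edges G = snd G"

definition fin_refl_digraph :: "'a digraph \<Rightarrow> bool" where
  "fin_refl_digraph G \<longleftrightarrow> finite (verts G) \<and> edges G \<subseteq> verts G \<times> verts G
     \<and> (\<forall>x\<in>verts G. (x, x) \<in> edges G)"

definition is_hom :: "('a \<Rightarrow> 'b) \<Rightarrow> 'a digraph \<Rightarrow> 'b digraph \<Rightarrow> bool" where
  "is_hom f G H \<longleftrightarrow> (\<forall>x\<in>verts G. f x \<in> verts H)
     \<and> (\<forall>x y. (x, y) \<in> edges G \<longrightarrow> (f x, f y) \<in> edges H)"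

definition is_surj_hom :: "('a \<Rightarrow> 'b) \<Rightarrow> 'a digraph \<Rightarrow> 'b digraph \<Rightarrow> bool" where
  "is_surj_hom f G H \<longleftrightarrow> is_hom f G H \<and> f ` verts G = verts H"

definition hom_image_le :: "'a digraph \<Rightarrow> 'b digraph \<Rightarrow> bool" where
  "hom_image_le A B \<longleftrightarrow> (\<exists>f. is_surj_hom f B A)"

definition digraph_iso :: "'a digraph \<Rightarrow> 'b digraph \<Rightarrow> bool" where
  "digraph_iso G H \<longleftrightarrow> (\<exists>f. bij_betw f (verts G) (verts H)
     \<and> (\<forall>x\<in>verts G. \<forall>y\<in>verts G. (x, y) \<in> edges G \<longleftrightarrow> (f x, f y) \<in> edges H))"

definition N_digraph :: "nat \<Rightarrow> nat \<Rightarrow> nat digraph" where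
  "N_digraph n k = ({1..n},
     {(i, j). i \<in> {1..n} \<and> j \<in> {1..n}} - {(2*m - 1, 2*m) | m. m \<in> {1..k}})"

text \<open>The class of all finite reflexive digraphs, represented (up to isomorphism)
  by those with vertices in nat.\<close>
definition DR :: "nat digraph set" where
  "DR = {G. fin_refl_digraph G}"

definition Av :: "'a digraph \<Rightarrow> nat digraph set" where
  "Av D = {E \<in> DR. \<not> hom_image_le D E}"

definition wqo_class :: "('b \<Rightarrow> 'b \<Rightarrow> bool) \<Rightarrow> 'b set \<Rightarrow> bool" where
  "wqo_class le C \<longleftrightarrow>
     (\<not> (\<exists>s::nat \<Rightarrow> 'b. (\<forall>i. s i \<in> C) \<and> (\<forall>i. le (s (Suc i)) (s i) \<and> \<not> le (s i) (s (Suc i)))))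
   \<and> (\<not> (\<exists>s::nat \<Rightarrow> 'b. (\<forall>i. s i \<in> C) \<and> (\<forall>i j. i \<noteq> j \<longrightarrow> \<not> le (s i) (s j))))"

end

theory Submission
  imports Defs "HOL-Library.Infinite_Set"
begin


lemma surj_hom_comp:
  assumes "is_surj_hom f A B" "is_surj_hom g B C"
  shows "is_surj_hom (g \<circ> f) A C"
proof -
  have "(g \<circ> f) ` verts A = g ` (f ` verts A)" by (simp add: image_comp)
  then show ?thesis using assms unfolding is_surj_hom_def is_hom_def by auto
qed

lemma hom_le_trans:
  assumes "hom_image_le A B" "hom_image_le B C"
  shows "hom_image_le A C"
  using assms surj_hom_comp unfolding hom_image_le_def by blast

lemma surj_exists:
  assumes "finite A" "finite B" "B \<noteq> {}" "card B \<le> card A"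
  shows "\<exists>g. g ` A = B"
proof -
  obtain h where h: "h ` B \<subseteq> A" "inj_on h B" using card_le_inj[OF assms(2,1,4)] by blast
  obtain b0 where b0: "b0 \<in> B" using assms(3) by blast
  define g where "g a = (if a \<in> h ` B then inv_into B h a else b0)" for a
  have "g ` A \<subseteq> B" unfolding g_def using b0 by (auto intro: inv_into_into)
  moreover have "B \<subseteq> g ` A"
  proof
    fix b assume "b \<in> B"
    then have "g (h b) = b" unfolding g_def using h by auto
    then show "b \<in> g ` A" using h \<open>b \<in> B\<close> by (metis image_eqI subsetD)
  qed
  ultimately show ?thesis by blast
qed

lemma good_imp_wqo:
  assumes good: "\<And>s::nat \<Rightarrow> nat digraph. (\<forall>i. s i \<in> C) \<Longrightarrow> \<exists>i j. i < j \<and> hom_image_le (s i) (s j)"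
  shows "wqo_class hom_image_le (C :: nat digraph set)"
  unfolding wqo_class_def
proof (intro conjI notI)
  assume "\<exists>s::nat \<Rightarrow> nat digraph. (\<forall>i. s i \<in> C) \<and> (\<forall>i. hom_image_le (s (Suc i)) (s i) \<and> \<not> hom_image_le (s i) (s (Suc i)))"
  then obtain s :: "nat \<Rightarrow> nat digraph" where s: "\<forall>i. s i \<in> C" "\<forall>i. hom_image_le (s (Suc i)) (s i)"
      "\<forall>i. \<not> hom_image_le (s i) (s (Suc i))" by blast
  have ch: "hom_image_le (s (i + d)) (s i)" if "d > 0" for i d
    using that
  proof (induction d)
    case 0 then show ?case by simp
  next
    case (Suc d)
    show ?case
    proof (cases "d = 0")
      case True then show ?thesis using s(2) by simp
    next
      case False
      then have h1: "hom_image_le (s (i + d)) (s i)" using Suc by simp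
      have h2: "hom_image_le (s (Suc (i + d))) (s (i + d))" using s(2) by blast
      from hom_le_trans[OF h2 h1] have "hom_image_le (s (Suc (i + d))) (s i)" .
      then show ?thesis by simp
    qed
  qed
  obtain i j where ij: "i < j" "hom_image_le (s i) (s j)" using good[of s] s(1) by blast
  have "hom_image_le (s i) (s (Suc i))"
  proof (cases "j = Suc i")
    case True then show ?thesis using ij by simp
  next
    case False
    then have "j - Suc i > 0" using ij by simp
    from ch[OF this, of "Suc i"] have "hom_image_le (s (Suc i + (j - Suc i))) (s (Suc i))" .
    moreover have "Suc i + (j - Suc i) = j" using ij by simp
    ultimately have h3: "hom_image_le (s j) (s (Suc i))" by simp
    from hom_le_trans[OF ij(2) h3] show ?thesis .
  qed
  then show False using s(3) by blast
next
  assume "\<exists>s::nat \<Rightarrow> nat digraph. (\<forall>i. s i \<in> C) \<and> (\<forall>i j. i \<noteq> j \<longrightarrow> \<not> hom_image_le (s i) (s j))"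
  then obtain s :: "nat \<Rightarrow> nat digraph" where s: "\<forall>i. s i \<in> C" "\<forall>i j. i \<noteq> j \<longrightarrow> \<not> hom_image_le (s i) (s j)" by blast
  obtain i j where "i < j" "hom_image_le (s i) (s j)" using good[of s] s(1) by blast
  then show False using s(2) by auto
qed



definition consistent :: "nat digraph \<Rightarrow> (nat \<Rightarrow> 'l) \<Rightarrow> bool" where
  "consistent E \<tau> \<longleftrightarrow> (\<forall>x\<in>verts E. \<forall>y\<in>verts E. \<forall>x'\<in>verts E. \<forall>y'\<in>verts E.
      x \<noteq> y \<longrightarrow> x' \<noteq> y' \<longrightarrow> \<tau> x = \<tau> x' \<longrightarrow> \<tau> y = \<tau> y' \<longrightarrow>
      ((x, y) \<in> edges E \<longleftrightarrow> (x', y') \<in> edges E))"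

definition nrho :: "nat digraph \<Rightarrow> (nat \<Rightarrow> 'l) \<Rightarrow> ('l \<times> 'l) set" where
  "nrho E \<tau> = {(\<tau> x, \<tau> y) | x y. x \<in> verts E \<and> y \<in> verts E \<and> x \<noteq> y \<and> (x, y) \<notin> edges E}"

definition cnt :: "nat digraph \<Rightarrow> (nat \<Rightarrow> 'l) \<Rightarrow> 'l \<Rightarrow> nat" where
  "cnt E \<tau> l = card {x \<in> verts E. \<tau> x = l}"

lemma hom_from_labels:
  assumes E: "fin_refl_digraph E" and E': "fin_refl_digraph E'" and cons: "consistent E' \<tau>'"
    and im: "\<tau> ` verts E = \<tau>' ` verts E'" and nr: "nrho E \<tau> = nrho E' \<tau>'"
    and c: "\<And>l. cnt E \<tau> l \<le> cnt E' \<tau>' l"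
  shows "hom_image_le E E'"
proof -
  define A where "A l = {x \<in> verts E'. \<tau>' x = l}" for l
  define B where "B l = {x \<in> verts E. \<tau> x = l}" for l
  have "\<forall>l\<in>\<tau>' ` verts E'. \<exists>g. g ` A l = B l"
  proof
    fix l assume l: "l \<in> \<tau>' ` verts E'"
    show "\<exists>g. g ` A l = B l"
    proof (rule surj_exists)
      show "finite (A l)" "finite (B l)" using E E' unfolding A_def B_def fin_refl_digraph_def by auto
      show "B l \<noteq> {}" proof -
        obtain y where "y \<in> verts E" "\<tau> y = l" using l im by (metis imageE)
        then show ?thesis unfolding B_def by blast
      qed
      show "card (B l) \<le> card (A l)" using c[of l] unfolding A_def B_def cnt_def .
    qed
  qed
  then obtain G where G0: "\<forall>l\<in>\<tau>' ` verts E'. G l ` A l = B l" by (rule bchoice[THEN exE])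
  have G: "G l ` A l = B l" if "l \<in> \<tau>' ` verts E'" for l using G0 that by blast
  define f where "f x = G (\<tau>' x) x" for x
  have fx: "f x \<in> verts E \<and> \<tau> (f x) = \<tau>' x" if "x \<in> verts E'" for x
  proof -
    have "x \<in> A (\<tau>' x)" using that unfolding A_def by auto
    then have "f x \<in> B (\<tau>' x)" using G[of "\<tau>' x"] that unfolding f_def by blast
    then show ?thesis unfolding B_def by auto
  qed
  have surj: "f ` verts E' = verts E"
  proof
    show "f ` verts E' \<subseteq> verts E" using fx by auto
    show "verts E \<subseteq> f ` verts E'"
    proof
      fix y assume y: "y \<in> verts E"
      let ?l = "\<tau> y"
      have l: "?l \<in> \<tau>' ` verts E'" using im y by auto
      have "y \<in> B ?l" using y unfolding B_def by auto
      then have "y \<in> G ?l ` A ?l" using G[OF l] by simp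
      then obtain x where x: "x \<in> A ?l" "G ?l x = y" by (rule imageE) auto
      then have "f x = y" unfolding f_def A_def by auto
      then show "y \<in> f ` verts E'" using x unfolding A_def by auto
    qed
  qed
  have hom: "(f x, f y) \<in> edges E" if xy: "(x, y) \<in> edges E'" for x y
  proof -
    have xv: "x \<in> verts E'" "y \<in> verts E'" using xy E' unfolding fin_refl_digraph_def by auto
    show ?thesis
    proof (rule ccontr)
      assume ne: "(f x, f y) \<notin> edges E"
      have "f x \<noteq> f y" using ne fx[OF xv(1)] E unfolding fin_refl_digraph_def by auto
      then have "x \<noteq> y" by auto
      have "(\<tau> (f x), \<tau> (f y)) \<in> nrho E \<tau>"
        unfolding nrho_def using ne fx xv \<open>f x \<noteq> f y\<close> by blast
      then have "(\<tau>' x, \<tau>' y) \<in> nrho E' \<tau>'" using nr fx xv by simp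
      then obtain x0 y0 where "x0 \<in> verts E'" "y0 \<in> verts E'" "x0 \<noteq> y0" "(x0, y0) \<notin> edges E'"
        "\<tau>' x0 = \<tau>' x" "\<tau>' y0 = \<tau>' y" unfolding nrho_def by auto
      then have "(x, y) \<notin> edges E'" using cons xv \<open>x \<noteq> y\<close> unfolding consistent_def by blast
      then show False using xy by simp
    qed
  qed
  have "is_surj_hom f E' E" unfolding is_surj_hom_def is_hom_def using fx surj hom by auto
  then show ?thesis unfolding hom_image_le_def by blast
qed

lemma mono_subset:
  fixes t :: "nat \<Rightarrow> nat"
  assumes "infinite J"
  shows "\<exists>J'\<subseteq>J. infinite J' \<and> (\<forall>i\<in>J'. \<forall>j\<in>J'. i < j \<longrightarrow> t i \<le> t j)"
proof -
  define J' where "J' = {i \<in> J. \<forall>j\<in>J. i < j \<longrightarrow> t i \<le> t j}"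
  have "\<exists>j\<in>J'. i0 \<le> j" for i0
  proof -
    have ex: "\<exists>v j. j \<in> J \<and> i0 \<le> j \<and> t j = v"
      using assms by (metis infinite_nat_iff_unbounded_le)
    define v where "v = (LEAST v. \<exists>j. j \<in> J \<and> i0 \<le> j \<and> t j = v)"
    obtain j where j: "j \<in> J" "i0 \<le> j" "t j = v"
      using LeastI_ex[OF ex] unfolding v_def by blast
    have "j \<in> J'" unfolding J'_def
    proof (intro CollectI conjI ballI impI)
      fix j' assume "j' \<in> J" "j < j'"
      then have "v \<le> t j'" unfolding v_def using j(2) by (intro Least_le) auto
      then show "t j \<le> t j'" using j by simp
    qed (use j in auto)
    then show ?thesis using j by blast
  qed
  then have "infinite J'" unfolding infinite_nat_iff_unbounded_le by blast
  moreover have "J' \<subseteq> J" unfolding J'_def by blast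
  moreover have "\<forall>i\<in>J'. \<forall>j\<in>J'. i < j \<longrightarrow> t i \<le> t j" unfolding J'_def by blast
  ultimately show ?thesis by blast
qed

lemma dickson:
  fixes c :: "nat \<Rightarrow> 'l \<Rightarrow> nat"
  assumes "finite L"
  shows "infinite I \<Longrightarrow> \<exists>J\<subseteq>I. infinite J \<and> (\<forall>i\<in>J. \<forall>j\<in>J. i < j \<longrightarrow> (\<forall>l\<in>L. c i l \<le> c j l))"
  using assms(1)
proof (induction L arbitrary: I rule: finite_induct)
  case empty then show ?case by blast
next
  case (insert l L)
  obtain J where J: "J \<subseteq> I" "infinite J" "\<forall>i\<in>J. \<forall>j\<in>J. i < j \<longrightarrow> (\<forall>l\<in>L. c i l \<le> c j l)"
    using insert.IH[OF insert.prems] by blast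
  obtain J' where J': "J' \<subseteq> J" "infinite J'" "\<forall>i\<in>J'. \<forall>j\<in>J'. i < j \<longrightarrow> c i l \<le> c j l"
    using mono_subset[OF J(2), of "\<lambda>i. c i l"] by blast
  have "J' \<subseteq> I" using J(1) J'(1) by blast
  moreover have "\<forall>i\<in>J'. \<forall>j\<in>J'. i < j \<longrightarrow> (\<forall>l'\<in>insert l L. c i l' \<le> c j l')"
    using J(3) J'(1,3) by blast
  ultimately show ?case using J'(2) by blast
qed

lemma good_labels:
  fixes s :: "nat \<Rightarrow> nat digraph" and \<tau> :: "nat \<Rightarrow> nat \<Rightarrow> 'l"
  assumes L: "finite L" and fr: "\<And>i. fin_refl_digraph (s i)"
    and lab: "\<And>i. \<tau> i ` verts (s i) \<subseteq> L" and cons: "\<And>i. consistent (s i) (\<tau> i)"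
  shows "\<exists>i j. i < j \<and> hom_image_le (s i) (s j)"
proof -
  define prof where "prof i = (nrho (s i) (\<tau> i), \<tau> i ` verts (s i))" for i
  have "prof ` UNIV \<subseteq> Pow (L \<times> L) \<times> Pow L"
    unfolding prof_def nrho_def using lab by fastforce
  moreover have "finite (Pow (L \<times> L) \<times> Pow L)" using L by simp
  ultimately have "finite (prof ` UNIV)" by (rule finite_subset)
  then obtain i0 where "infinite {i \<in> UNIV. prof i = prof i0}"
    using pigeonhole_infinite[of UNIV prof] by auto
  then have I: "infinite {i. prof i = prof i0}" by simp
  obtain J where J: "J \<subseteq> {i. prof i = prof i0}" "infinite J"
      "\<forall>i\<in>J. \<forall>j\<in>J. i < j \<longrightarrow> (\<forall>l\<in>L. cnt (s i) (\<tau> i) l \<le> cnt (s j) (\<tau> j) l)"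
    using dickson[OF L I, of "\<lambda>i l. cnt (s i) (\<tau> i) l"] by blast
  have "J \<noteq> {}" using J(2) by auto
  then obtain i where i: "i \<in> J" by blast
  obtain j where j: "j \<in> J" "i < j" using J(2) unfolding infinite_nat_iff_unbounded by blast
  have "prof i = prof i0" "prof j = prof i0" using i j J(1) by blast+
  then have pe: "prof i = prof j" by simp
  have "hom_image_le (s i) (s j)"
  proof (rule hom_from_labels[OF fr fr cons])
    show "\<tau> i ` verts (s i) = \<tau> j ` verts (s j)" "nrho (s i) (\<tau> i) = nrho (s j) (\<tau> j)"
      using pe unfolding prof_def by auto
    fix l
    show "cnt (s i) (\<tau> i) l \<le> cnt (s j) (\<tau> j) l"
    proof (cases "l \<in> L")
      case True then show ?thesis using J(3) i j by blast
    next
      case False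
      then have "{x \<in> verts (s i). \<tau> i x = l} = {}" using lab[of i] by auto
      then show ?thesis unfolding cnt_def by (simp only: card.empty)
    qed
  qed
  then show ?thesis using j by blast
qed



definition succ :: "nat \<Rightarrow> nat \<Rightarrow> nat" where
  "succ N x = (if x + 1 = N then 0 else x + 1)"
definition pred :: "nat \<Rightarrow> nat \<Rightarrow> nat" where
  "pred N x = (if x = 0 then N - 1 else x - 1)"

definition nedge :: "'a digraph \<Rightarrow> ('a \<times> 'a) set" where
  "nedge D = {(x, y). x \<in> verts D \<and> y \<in> verts D \<and> x \<noteq> y \<and> (x, y) \<notin> edges D}"

lemma pull_ne:
  assumes "is_surj_hom f E D" "(f x, f y) \<notin> edges D"
  shows "(x, y) \<notin> edges E"
  using assms unfolding is_surj_hom_def is_hom_def by blast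

lemma hom_le_card:
  assumes "hom_image_le A B" "finite (verts B)"
  shows "card (verts A) \<le> card (verts B)"
proof -
  obtain f where "is_surj_hom f B A" using assms unfolding hom_image_le_def by blast
  then have "f ` verts B = verts A" unfolding is_surj_hom_def by blast
  then show ?thesis using card_image_le[OF assms(2), of f] by simp
qed

lemma cyc_count:
  fixes f :: "nat \<Rightarrow> nat"
  assumes Na: "1 \<le> Na" and surj: "\<And>u. u < Na \<Longrightarrow> \<exists>x\<in>V. f x = u"
    and step: "\<And>x. x \<in> V \<Longrightarrow> f x < Na \<Longrightarrow> x < Nb \<and> succ Nb x \<in> V \<and> f (succ Nb x) < Na
        \<and> (\<forall>y\<in>V. \<forall>y'\<in>V. f y = succ Na (f x) \<longrightarrow> f y' = succ Na (f x) \<longrightarrow> y = y')"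
  shows "Nb \<le> Na"
proof -
  define S where "S = {x \<in> V. f x < Na}"
  obtain x0 where x0: "x0 \<in> V" "f x0 = 0" using surj Na by force
  then have x0S: "x0 \<in> S" using Na unfolding S_def by simp
  have x0b: "x0 < Nb" using step x0 Na by force
  have reach: "t < Nb \<longrightarrow> (if x0 + t < Nb then x0 + t else x0 + t - Nb) \<in> S" for t
  proof (induction t)
    case 0 then show ?case using x0S x0b by simp
  next
    case (Suc t)
    show ?case
    proof
      assume t: "Suc t < Nb"
      define v where "v = (if x0 + t < Nb then x0 + t else x0 + t - Nb)"
      have vS: "v \<in> S" using Suc t unfolding v_def by simp
      then have "succ Nb v \<in> S" using step unfolding S_def by blast
      moreover have "succ Nb v = (if x0 + Suc t < Nb then x0 + Suc t else x0 + Suc t - Nb)"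
        unfolding v_def succ_def using t x0b by auto
      ultimately show "(if x0 + Suc t < Nb then x0 + Suc t else x0 + Suc t - Nb) \<in> S" by simp
    qed
  qed
  have allS: "z \<in> S" if "z < Nb" for z
  proof (cases "x0 \<le> z")
    case True
    then show ?thesis using reach[of "z - x0"] that by auto
  next
    case False
    then show ?thesis using reach[of "z + Nb - x0"] that x0b by auto
  qed
  have inj: "inj_on f {0..<Nb}"
  proof (rule inj_onI)
    fix x x' assume xx: "x \<in> {0..<Nb}" "x' \<in> {0..<Nb}" "f x = f x'"
    then have xS: "x \<in> S" "x' \<in> S" using allS by auto
    let ?u = "f x"
    have u: "?u < Na" using xS unfolding S_def by auto
    have "pred Na ?u < Na" unfolding pred_def using u Na by auto
    then obtain w where w: "w \<in> V" "f w = pred Na ?u" using surj by blast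
    have wS: "f w < Na" using w \<open>pred Na ?u < Na\<close> by simp
    have sp: "succ Na (f w) = ?u" using w u unfolding succ_def pred_def by auto
    show "x = x'" using step[OF w(1) wS] xS xx(3) sp unfolding S_def by auto
  qed
  have "f ` {0..<Nb} \<subseteq> {0..<Na}" using allS unfolding S_def by auto
  from card_inj_on_le[OF inj this] show ?thesis by simp
qed



definition pn :: "nat \<Rightarrow> nat \<Rightarrow> nat \<Rightarrow> bool" where
  "pn m x y \<longleftrightarrow> x < m \<and> y = succ m x \<and> x \<noteq> y"
definition Pg :: "nat \<Rightarrow> nat digraph" where
  "Pg m = ({0..m}, {(x, y). x \<le> m \<and> y \<le> m \<and> \<not> pn m x y})"

definition qn :: "nat \<Rightarrow> nat \<Rightarrow> nat \<Rightarrow> bool" where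
  "qn m x y \<longleftrightarrow> x < 2*m \<and> even x \<and> (y = succ (2*m) x \<or> y = pred (2*m) x) \<and> x \<noteq> y"
definition Qg :: "nat \<Rightarrow> nat digraph" where
  "Qg m = ({0..2*m}, {(x, y). x \<le> 2*m \<and> y \<le> 2*m \<and> \<not> qn m x y})"

lemma Pg_v: "verts (Pg m) = {0..m}" and Pg_e: "(x, y) \<in> edges (Pg m) \<longleftrightarrow> x \<le> m \<and> y \<le> m \<and> \<not> pn m x y"
  unfolding Pg_def verts_def edges_def by auto
lemma Qg_v: "verts (Qg m) = {0..2*m}" and Qg_e: "(x, y) \<in> edges (Qg m) \<longleftrightarrow> x \<le> 2*m \<and> y \<le> 2*m \<and> \<not> qn m x y"
  unfolding Qg_def verts_def edges_def by auto

lemma Pg_fr: "fin_refl_digraph (Pg m)"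
  unfolding fin_refl_digraph_def Pg_v using Pg_e pn_def by auto
lemma Qg_fr: "fin_refl_digraph (Qg m)"
  unfolding fin_refl_digraph_def Qg_v using Qg_e qn_def by auto

lemma P_anti:
  assumes a: "2 \<le> a" and ab: "a < b"
  shows "\<not> hom_image_le (Pg a) (Pg b)"
proof
  assume "hom_image_le (Pg a) (Pg b)"
  then obtain f where f: "is_surj_hom f (Pg b) (Pg a)" unfolding hom_image_le_def by blast
  have im: "f ` {0..b} = {0..a}" using f unfolding is_surj_hom_def Pg_v by simp
  have "b \<le> a"
  proof (rule cyc_count[where f = f and V = "{0..b}"])
    show "1 \<le> a" using a by simp
    fix u assume "u < a" then show "\<exists>x\<in>{0..b}. f x = u" using im by (metis atLeastAtMost_iff imageE le0 less_imp_le)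
  next
    fix x assume x: "x \<in> {0..b}" "f x < a"
    let ?u = "f x"
    have "succ a ?u \<le> a" unfolding succ_def using x(2) by auto
    then obtain y where y: "y \<in> {0..b}" "f y = succ a ?u" using im by (metis atLeastAtMost_iff imageE le0)
    have pnu: "pn a ?u (succ a ?u)" unfolding pn_def succ_def using x a by auto
    have key: "pn b x z" if "z \<in> {0..b}" "f z = succ a ?u" for z
    proof -
      have "(f x, f z) \<notin> edges (Pg a)" using pnu that Pg_e by auto
      then have "(x, z) \<notin> edges (Pg b)" using pull_ne[OF f] by blast
      then show ?thesis using Pg_e that x by auto
    qed
    from key[OF y] have xb: "x < b" and ys: "y = succ b x" unfolding pn_def by auto
    have sa: "succ a ?u < a" unfolding succ_def using x by auto
    have uni: "z = succ b x" if "z \<in> {0..b}" "f z = succ a ?u" for z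
      using key[OF that] unfolding pn_def by blast
    have "f (succ b x) < a" using sa y ys by simp
    moreover have "succ b x \<in> {0..b}" using xb unfolding succ_def by auto
    ultimately show "x < b \<and> succ b x \<in> {0..b} \<and> f (succ b x) < a
        \<and> (\<forall>y\<in>{0..b}. \<forall>y'\<in>{0..b}. f y = succ a (f x) \<longrightarrow> f y' = succ a (f x) \<longrightarrow> y = y')"
      using xb uni by metis
  qed
  then show False using ab by simp
qed

lemma par1: "even u \<Longrightarrow> u + 1 \<noteq> 2*(a::nat)" by presburger

lemma Q_arith_even:
  assumes "2 \<le> a" "u < 2*a" "even u"
  shows "qn a u (succ (2*a) u)" "qn a u (pred (2*a) u)" "succ (2*a) u \<noteq> pred (2*a) u"
    "succ (2*a) u < 2*a" "pred (2*a) u < 2*a"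
proof -
  show "qn a u (succ (2*a) u)" using assms par1[of u a] unfolding qn_def succ_def pred_def by auto
  show "qn a u (pred (2*a) u)" using assms unfolding qn_def succ_def pred_def by (cases "u = 0") auto
  show "succ (2*a) u \<noteq> pred (2*a) u" using assms unfolding succ_def pred_def by (cases "u = 0"; cases "u + 1 = 2*a") auto
  show "succ (2*a) u < 2*a" "pred (2*a) u < 2*a" using assms unfolding succ_def pred_def by auto
qed

lemma Q_arith_odd:
  assumes "2 \<le> a" "u < 2*a" "odd u"
  shows "qn a (pred (2*a) u) u" "qn a (succ (2*a) u) u" "succ (2*a) u \<noteq> pred (2*a) u"
    "succ (2*a) u < 2*a" "pred (2*a) u < 2*a"
proof -
  show "qn a (pred (2*a) u) u" using assms unfolding qn_def succ_def pred_def by (cases "u = 0") auto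
  show "qn a (succ (2*a) u) u" using assms unfolding qn_def succ_def pred_def by (cases "u + 1 = 2*a") auto
  show "succ (2*a) u \<noteq> pred (2*a) u" using assms unfolding succ_def pred_def by (cases "u = 0"; cases "u + 1 = 2*a") auto
  show "succ (2*a) u < 2*a" "pred (2*a) u < 2*a" using assms unfolding succ_def pred_def by auto
qed

lemma Q_inv:
  assumes "qn b z x"
  shows "z = succ (2*b) x \<or> z = pred (2*b) x" "x < 2*b" "z < 2*b"
proof -
  show "z = succ (2*b) x \<or> z = pred (2*b) x" using assms unfolding qn_def succ_def pred_def
    by (cases "z = 0"; cases "z + 1 = 2*b"; cases "x = 0"; cases "x + 1 = 2*b") auto
  show "x < 2*b" "z < 2*b" using assms unfolding qn_def succ_def pred_def by auto
qed

lemma Q_anti: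
  assumes a: "2 \<le> a" and ab: "a < b"
  shows "\<not> hom_image_le (Qg a) (Qg b)"
proof
  assume "hom_image_le (Qg a) (Qg b)"
  then obtain f where f: "is_surj_hom f (Qg b) (Qg a)" unfolding hom_image_le_def by blast
  have im: "f ` {0..2*b} = {0..2*a}" using f unfolding is_surj_hom_def Qg_v by simp
  have pre: "\<exists>y\<in>{0..2*b}. f y = t" if "t < 2*a" for t
    using im that by (metis atLeastAtMost_iff imageE le0 less_imp_le)
  have nq: "qn b x z" if "x \<in> {0..2*b}" "z \<in> {0..2*b}" "qn a (f x) (f z)" for x z
  proof -
    have "(f x, f z) \<notin> edges (Qg a)" using that Qg_e by auto
    then have "(x, z) \<notin> edges (Qg b)" using pull_ne[OF f] by blast
    then show ?thesis using Qg_e that by auto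
  qed
  have "2*b \<le> 2*a"
  proof (rule cyc_count[where f = f and V = "{0..2*b}"])
    show "1 \<le> 2*a" using a by simp
    fix u assume "u < 2*a" then show "\<exists>x\<in>{0..2*b}. f x = u" using pre by blast
  next
    fix x assume x: "x \<in> {0..2*b}" "f x < 2*a"
    let ?u = "f x" let ?p = "succ (2*b) x" let ?q = "pred (2*b) x"
    show "x < 2*b \<and> ?p \<in> {0..2*b} \<and> f ?p < 2*a
        \<and> (\<forall>y\<in>{0..2*b}. \<forall>y'\<in>{0..2*b}. f y = succ (2*a) (f x) \<longrightarrow> f y' = succ (2*a) (f x) \<longrightarrow> y = y')"
    proof (cases "even ?u")
      case True
      note A = Q_arith_even[OF a x(2) True]
      obtain y1 where y1: "y1 \<in> {0..2*b}" "f y1 = succ (2*a) ?u" using pre A(4) by blast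
      obtain y2 where y2: "y2 \<in> {0..2*b}" "f y2 = pred (2*a) ?u" using pre A(5) by blast
      have q1: "qn b x y1" using nq[OF x(1) y1(1)] A(1) y1 by simp
      have q2: "qn b x y2" using nq[OF x(1) y2(1)] A(2) y2 by simp
      have xb: "x < 2*b" using q1 unfolding qn_def by simp
      have inpq: "z = ?p \<or> z = ?q" if "qn b x z" for z using that unfolding qn_def by blast
      have d: "y1 \<noteq> y2" using y1 y2 A(3) by auto
      have "?p = y1 \<or> ?p = y2" using inpq[OF q1] inpq[OF q2] d by blast
      then have fp: "f ?p < 2*a" using y1 y2 A by auto
      have pv: "?p \<in> {0..2*b}" unfolding succ_def using xb by auto
      have uni: "y = y1" if "y \<in> {0..2*b}" "f y = succ (2*a) ?u" for y
      proof -
        have "qn b x y" using nq[OF x(1) that(1)] A(1) that(2) by simp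
        then have "y = ?p \<or> y = ?q" by (rule inpq)
        moreover have "y \<noteq> y2" using that y2 A(3) by auto
        ultimately show ?thesis using inpq[OF q1] inpq[OF q2] d by blast
      qed
      show ?thesis using xb pv fp uni by metis
    next
      case False
      note A = Q_arith_odd[OF a x(2) False]
      obtain z1 where z1: "z1 \<in> {0..2*b}" "f z1 = pred (2*a) ?u" using pre A(5) by blast
      obtain z2 where z2: "z2 \<in> {0..2*b}" "f z2 = succ (2*a) ?u" using pre A(4) by blast
      have q1: "qn b z1 x" using nq[OF z1(1) x(1)] A(1) z1 by simp
      have q2: "qn b z2 x" using nq[OF z2(1) x(1)] A(2) z2 by simp
      have xb: "x < 2*b" using Q_inv[OF q1] by simp
      have inpq: "z = ?p \<or> z = ?q" if "qn b z x" for z using Q_inv[OF that] by blast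
      have d: "z1 \<noteq> z2" using z1 z2 A(3) by auto
      have "?p = z1 \<or> ?p = z2" using inpq[OF q1] inpq[OF q2] d by blast
      then have fp: "f ?p < 2*a" using z1 z2 A by auto
      have pv: "?p \<in> {0..2*b}" unfolding succ_def using xb by auto
      have uni: "y = z2" if "y \<in> {0..2*b}" "f y = succ (2*a) ?u" for y
      proof -
        have "qn b y x" using nq[OF that(1) x(1)] A(2) that(2) by simp
        then have "y = ?p \<or> y = ?q" by (rule inpq)
        moreover have "y \<noteq> z1" using that z1 A(3) by auto
        ultimately show ?thesis using inpq[OF q1] inpq[OF q2] d by blast
      qed
      show ?thesis using xb pv fp uni by metis
    qed
  qed
  then show False using ab by simp
qed



lemma pre_surj:
  assumes "is_surj_hom f G D" "d \<in> verts D"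
  shows "\<exists>x\<in>verts G. f x = d"
  using assms unfolding is_surj_hom_def by (metis imageE)

lemma ne_in: "(x, y) \<in> nedge D \<Longrightarrow> x \<in> verts D \<and> y \<in> verts D \<and> x \<noteq> y \<and> (x, y) \<notin> edges D"
  unfolding nedge_def by auto

lemma P_avoid:
  assumes m: "1 \<le> m"
    and cases: "(\<forall>x\<in>verts D. \<exists>y. (x, y) \<in> nedge D \<or> (y, x) \<in> nedge D)
      \<or> (\<exists>x y z. (x, y) \<in> nedge D \<and> (x, z) \<in> nedge D \<and> y \<noteq> z)
      \<or> (\<exists>x y z. (y, x) \<in> nedge D \<and> (z, x) \<in> nedge D \<and> y \<noteq> z)"
  shows "\<not> hom_image_le D (Pg m)"
proof
  assume "hom_image_le D (Pg m)"
  then obtain f where f: "is_surj_hom f (Pg m) D" unfolding hom_image_le_def by blast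
  have fv: "f x \<in> verts D" if "x \<le> m" for x
    using f that unfolding is_surj_hom_def is_hom_def Pg_v by auto
  have pre: "\<exists>x. x \<le> m \<and> f x = d" if "d \<in> verts D" for d
    using pre_surj[OF f that] unfolding Pg_v by auto
  have pl: "pn m x y" if "(f x, f y) \<in> nedge D" "x \<le> m" "y \<le> m" for x y
  proof -
    have "(x, y) \<notin> edges (Pg m)" using pull_ne[OF f] ne_in[OF that(1)] by blast
    then show ?thesis using Pg_e that by auto
  qed
  from cases show False
  proof (elim disjE exE conjE)
    assume A: "\<forall>x\<in>verts D. \<exists>y. (x, y) \<in> nedge D \<or> (y, x) \<in> nedge D"
    have "f m \<in> verts D" using fv[of m] by simp
    then obtain e where e: "(f m, e) \<in> nedge D \<or> (e, f m) \<in> nedge D" using A by blast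
    then have "e \<in> verts D" using ne_in by (metis)
    then obtain y where y: "y \<le> m" "f y = e" using pre by blast
    show False using e
    proof
      assume "(f m, e) \<in> nedge D"
      then have "pn m m y" using pl[of m y] y by simp
      then show False unfolding pn_def by simp
    next
      assume "(e, f m) \<in> nedge D"
      then have "pn m y m" using pl[of y m] y by simp
      then show False unfolding pn_def succ_def using m by (auto split: if_splits)
    qed
  next
    fix x y z assume h: "(x, y) \<in> nedge D" "(x, z) \<in> nedge D" "y \<noteq> z"
    obtain x' where x': "x' \<le> m" "f x' = x" using pre ne_in[OF h(1)] by blast
    obtain y' where y': "y' \<le> m" "f y' = y" using pre ne_in[OF h(1)] by blast
    obtain z' where z': "z' \<le> m" "f z' = z" using pre ne_in[OF h(2)] by blast
    have h1: "pn m x' y'" using pl[of x' y'] h x' y' by simp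
    have h2: "pn m x' z'" using pl[of x' z'] h x' z' by simp
    from h1 h2 have "y' = z'" unfolding pn_def by simp
    then show False using y' z' h(3) by simp
  next
    fix x y z assume h: "(y, x) \<in> nedge D" "(z, x) \<in> nedge D" "y \<noteq> z"
    obtain x' where x': "x' \<le> m" "f x' = x" using pre ne_in[OF h(1)] by blast
    obtain y' where y': "y' \<le> m" "f y' = y" using pre ne_in[OF h(1)] by blast
    obtain z' where z': "z' \<le> m" "f z' = z" using pre ne_in[OF h(2)] by blast
    have h1: "pn m y' x'" using pl[of y' x'] h x' y' by simp
    have h2: "pn m z' x'" using pl[of z' x'] h x' z' by simp
    from h1 h2 have "y' = z'" unfolding pn_def succ_def by (auto split: if_splits)
    then show False using y' z' h(3) by simp
  qed
qed

lemma qn_odd: "qn m x y \<Longrightarrow> odd y"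
  unfolding qn_def succ_def pred_def by (cases "x = 0"; cases "x + 1 = 2*m") (auto; presburger)+

lemma qn_even: "qn m x y \<Longrightarrow> even x"
  unfolding qn_def by simp

lemma Q_avoid:
  assumes h: "(x, y) \<in> nedge D" "(y, z) \<in> nedge D"
  shows "\<not> hom_image_le D (Qg m)"
proof
  assume "hom_image_le D (Qg m)"
  then obtain f where f: "is_surj_hom f (Qg m) D" unfolding hom_image_le_def by blast
  have pre: "\<exists>x. x \<le> 2*m \<and> f x = d" if "d \<in> verts D" for d
    using pre_surj[OF f that] unfolding Qg_v by auto
  have pl: "qn m x y" if "(f x, f y) \<in> nedge D" "x \<le> 2*m" "y \<le> 2*m" for x y
  proof -
    have "(x, y) \<notin> edges (Qg m)" using pull_ne[OF f] ne_in[OF that(1)] by blast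
    then show ?thesis using Qg_e that by auto
  qed
  obtain x' where x': "x' \<le> 2*m" "f x' = x" using pre ne_in[OF h(1)] by blast
  obtain y' where y': "y' \<le> 2*m" "f y' = y" using pre ne_in[OF h(1)] by blast
  obtain z' where z': "z' \<le> 2*m" "f z' = z" using pre ne_in[OF h(2)] by blast
  have h1: "qn m x' y'" using pl[of x' y'] h x' y' by simp
  have h2: "qn m y' z'" using pl[of y' z'] h y' z' by simp
  from qn_odd[OF h1] qn_even[OF h2] show False by simp
qed

lemma antichain_not_wqo:
  fixes G :: "nat \<Rightarrow> nat digraph" and D :: "'a digraph"
  assumes fr: "\<And>m. fin_refl_digraph (G m)"
    and av: "\<And>m. 2 \<le> m \<Longrightarrow> \<not> hom_image_le D (G m)"
    and anti: "\<And>a b. 2 \<le> a \<Longrightarrow> a < b \<Longrightarrow> \<not> hom_image_le (G a) (G b)"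
    and cardv: "\<And>a b. a < b \<Longrightarrow> card (verts (G a)) < card (verts (G b))"
  shows "\<not> wqo_class hom_image_le (Av D)"
proof -
  define s where "s i = G (i + 2)" for i
  have "s i \<in> Av D" for i unfolding s_def Av_def DR_def using fr[of "i+2"] av[of "i+2"] by simp
  moreover have "\<not> hom_image_le (s i) (s j)" if "i \<noteq> j" for i j
  proof (cases "i < j")
    case True then show ?thesis unfolding s_def using anti by simp
  next
    case False
    then have "j < i" using that by simp
    show ?thesis
    proof
      assume "hom_image_le (s i) (s j)"
      moreover have "finite (verts (s j))" using fr[of "j+2"] unfolding fin_refl_digraph_def s_def by simp
      ultimately have "card (verts (s i)) \<le> card (verts (s j))" by (rule hom_le_card)
      then show False using cardv[of "j + 2" "i + 2"] \<open>j < i\<close> unfolding s_def by simp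
    qed
  qed
  ultimately have "\<exists>s::nat \<Rightarrow> nat digraph. (\<forall>i. s i \<in> Av D) \<and> (\<forall>i j. i \<noteq> j \<longrightarrow> \<not> hom_image_le (s i) (s j))"
    by (intro exI[of _ s]) blast
  then show ?thesis unfolding wqo_class_def by simp
qed

lemma not_wqo_P:
  assumes "(\<forall>x\<in>verts D. \<exists>y. (x, y) \<in> nedge D \<or> (y, x) \<in> nedge D)
      \<or> (\<exists>x y z. (x, y) \<in> nedge D \<and> (x, z) \<in> nedge D \<and> y \<noteq> z)
      \<or> (\<exists>x y z. (y, x) \<in> nedge D \<and> (z, x) \<in> nedge D \<and> y \<noteq> z)"
  shows "\<not> wqo_class hom_image_le (Av D)"
  by (rule antichain_not_wqo[where G = Pg]) (use Pg_fr P_avoid[OF _ assms] P_anti Pg_v in simp_all)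

lemma not_wqo_Q:
  assumes "(x, y) \<in> nedge D" "(y, z) \<in> nedge D"
  shows "\<not> wqo_class hom_image_le (Av D)"
  by (rule antichain_not_wqo[where G = Qg]) (use Qg_fr Q_avoid[OF assms] Q_anti Qg_v in simp_all)



lemma N_v: "verts (N_digraph n k) = {1..n}"
  unfolding N_digraph_def verts_def by simp

lemma N_e: "(i, j) \<in> edges (N_digraph n k) \<longleftrightarrow>
    i \<in> {1..n} \<and> j \<in> {1..n} \<and> \<not> (\<exists>p<k. i = 2*p + 1 \<and> j = 2*p + 2)"
proof -
  have "(\<exists>m. (i, j) = (2*m - 1, 2*m) \<and> m \<in> {1..k}) \<longleftrightarrow> (\<exists>p<k. i = 2*p + 1 \<and> j = 2*p + 2)"
  proof
    assume "\<exists>m. (i, j) = (2*m - 1, 2*m) \<and> m \<in> {1..k}"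
    then obtain m where "(i, j) = (2*m - 1, 2*m)" "m \<in> {1..k}" by blast
    then show "\<exists>p<k. i = 2*p + 1 \<and> j = 2*p + 2" by (intro exI[of _ "m - 1"]) auto
  next
    assume "\<exists>p<k. i = 2*p + 1 \<and> j = 2*p + 2"
    then obtain p where "p < k" "i = 2*p + 1" "j = 2*p + 2" by blast
    then show "\<exists>m. (i, j) = (2*m - 1, 2*m) \<and> m \<in> {1..k}" by (intro exI[of _ "p + 1"]) auto
  qed
  then show ?thesis unfolding N_digraph_def edges_def by auto
qed

lemma iso_N:
  assumes fr: "fin_refl_digraph D"
    and nA: "\<exists>x\<in>verts D. \<forall>y. (x, y) \<notin> nedge D \<and> (y, x) \<notin> nedge D"
    and nB1: "\<And>x y z. (x, y) \<in> nedge D \<Longrightarrow> (x, z) \<in> nedge D \<Longrightarrow> y = z"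
    and nB2: "\<And>x y z. (y, x) \<in> nedge D \<Longrightarrow> (z, x) \<in> nedge D \<Longrightarrow> y = z"
    and nC: "\<And>x y z. (x, y) \<in> nedge D \<Longrightarrow> (y, z) \<notin> nedge D"
  shows "\<exists>n k. 2 * k < n \<and> digraph_iso D (N_digraph n k)"
proof -
  define ne where "ne = nedge D"
  have neV: "ne \<subseteq> verts D \<times> verts D" unfolding ne_def nedge_def by auto
  have finV: "finite (verts D)" using fr unfolding fin_refl_digraph_def by simp
  have fne: "finite ne" using neV finV by (meson finite_SigmaI finite_subset)
  define k where "k = card ne"
  obtain e where e: "bij_betw e {0..<k} ne" using ex_bij_betw_nat_finite[OF fne] unfolding k_def by blast
  define F where "F = verts D - (fst ` ne \<union> snd ` ne)"
  have fF: "finite F" using finV unfolding F_def by simp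
  define c where "c = card F"
  obtain hF where hF: "bij_betw hF {0..<c} F" using ex_bij_betw_nat_finite[OF fF] unfolding c_def by blast
  obtain x0 where x0: "x0 \<in> verts D" "\<forall>y. (x0, y) \<notin> ne \<and> (y, x0) \<notin> ne" using nA unfolding ne_def by blast
  have "x0 \<in> F" unfolding F_def using x0 by force
  then have c1: "1 \<le> c" unfolding c_def using fF by (metis One_nat_def Suc_leI card_gt_0_iff empty_iff)
  define n where "n = 2*k + c"
  define \<psi> where "\<psi> i = (if i \<le> 2*k then (if odd i then fst (e (i div 2)) else snd (e (i div 2 - 1)))
      else hF (i - 2*k - 1))" for i
  have eIn: "e p \<in> ne" if "p < k" for p using e that unfolding bij_betw_def by auto
  have eInj: "p = q" if "p < k" "q < k" "e p = e q" for p q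
    using e that unfolding bij_betw_def inj_on_def by auto
  have fstinj: "p = q" if "p < k" "q < k" "fst (e p) = fst (e q)" for p q
  proof -
    have "snd (e p) = snd (e q)" using nB1[of "fst (e p)" "snd (e p)" "snd (e q)"] eIn[OF that(1)] eIn[OF that(2)] that(3)
      unfolding ne_def by (metis prod.collapse)
    then have "e p = e q" using that(3) by (simp add: prod_eq_iff)
    then show ?thesis using eInj that by blast
  qed
  have sndinj: "p = q" if "p < k" "q < k" "snd (e p) = snd (e q)" for p q
  proof -
    have "fst (e p) = fst (e q)" using nB2[of "fst (e p)" "snd (e p)" "fst (e q)"] eIn[OF that(1)] eIn[OF that(2)] that(3)
      unfolding ne_def by (metis prod.collapse)
    then have "e p = e q" using that(3) by (simp add: prod_eq_iff)
    then show ?thesis using eInj that by blast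
  qed
  have fs: "fst (e p) \<noteq> snd (e q)" if "p < k" "q < k" for p q
  proof
    assume h: "fst (e p) = snd (e q)"
    have "(fst (e q), snd (e q)) \<in> nedge D" using eIn[OF that(2)] unfolding ne_def by simp
    moreover have "(snd (e q), snd (e p)) \<in> nedge D" using eIn[OF that(1)] h unfolding ne_def by (metis prod.collapse)
    ultimately show False using nC by blast
  qed
  have hFin: "hF j \<in> F" if "j < c" for j using hF that unfolding bij_betw_def by auto
  have hFinj: "j = j'" if "j < c" "j' < c" "hF j = hF j'" for j j'
    using hF that unfolding bij_betw_def inj_on_def by auto
  have Fnf: "hF j \<noteq> fst (e p)" "hF j \<noteq> snd (e p)" if "j < c" "p < k" for j p
    using hFin[OF that(1)] eIn[OF that(2)] unfolding F_def by force+
  have ps1: "\<psi> (2*p + 1) = fst (e p)" if "p < k" for p unfolding \<psi>_def using that by auto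
  have ps2: "\<psi> (2*p + 2) = snd (e p)" if "p < k" for p unfolding \<psi>_def using that by auto
  have ps3: "\<psi> (2*k + 1 + j) = hF j" for j unfolding \<psi>_def by auto
  have kind: "(\<exists>p<k. i = 2*p + 1) \<or> (\<exists>p<k. i = 2*p + 2) \<or> (\<exists>j<c. i = 2*k + 1 + j)"
    if "i \<in> {1..n}" for i
  proof (cases "i \<le> 2*k")
    case True
    have "1 \<le> i" using that by simp
    show ?thesis
    proof (cases "odd i")
      case True
      then obtain p where "i = 2*p + 1" by (elim oddE) simp
      then have "p < k" "i = 2*p + 1" using \<open>i \<le> 2*k\<close> by auto
      then show ?thesis by blast
    next
      case False
      then have "even i" by simp
      then obtain q where q: "i = 2*q" by (rule evenE)
      then have "i = 2*(q - 1) + 2" "q - 1 < k" using \<open>1 \<le> i\<close> \<open>i \<le> 2*k\<close> by auto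
      then show ?thesis by blast
    qed
  next
    case False
    then show ?thesis using that unfolding n_def by (intro disjI2 exI[of _ "i - 2*k - 1"]) auto
  qed
  have inj: "inj_on \<psi> {1..n}"
  proof (rule inj_onI)
    fix i i' assume i: "i \<in> {1..n}" and i': "i' \<in> {1..n}" and eq: "\<psi> i = \<psi> i'"
    from kind[OF i] kind[OF i'] show "i = i'"
    proof (elim disjE exE conjE)
      fix p q assume "p < k" "i = 2*p+1" "q < k" "i' = 2*q+1"
      then show ?thesis using eq ps1 fstinj by metis
    next
      fix p q assume "p < k" "i = 2*p+1" "q < k" "i' = 2*q+2"
      then show ?thesis using eq ps1 ps2 fs by metis
    next
      fix p q assume "p < k" "i = 2*p+1" "q < c" "i' = 2*k+1+q"
      then show ?thesis using eq ps1 ps3 Fnf by metis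
    next
      fix p q assume "p < k" "i = 2*p+2" "q < k" "i' = 2*q+1"
      then show ?thesis using eq ps1 ps2 fs by metis
    next
      fix p q assume "p < k" "i = 2*p+2" "q < k" "i' = 2*q+2"
      then show ?thesis using eq ps2 sndinj by metis
    next
      fix p q assume "p < k" "i = 2*p+2" "q < c" "i' = 2*k+1+q"
      then show ?thesis using eq ps2 ps3 Fnf by metis
    next
      fix p q assume "p < c" "i = 2*k+1+p" "q < k" "i' = 2*q+1"
      then show ?thesis using eq ps1 ps3 Fnf by metis
    next
      fix p q assume "p < c" "i = 2*k+1+p" "q < k" "i' = 2*q+2"
      then show ?thesis using eq ps2 ps3 Fnf by metis
    next
      fix p q assume "p < c" "i = 2*k+1+p" "q < c" "i' = 2*k+1+q"
      then show ?thesis using eq ps3 hFinj by metis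
    qed
  qed
  have img: "\<psi> ` {1..n} = verts D"
  proof
    show "\<psi> ` {1..n} \<subseteq> verts D"
    proof
      fix x assume "x \<in> \<psi> ` {1..n}"
      then obtain i where i: "i \<in> {1..n}" "x = \<psi> i" by blast
      from kind[OF i(1)] show "x \<in> verts D"
      proof (elim disjE exE conjE)
        fix p assume "p < k" "i = 2*p+1"
        then show ?thesis using i ps1 eIn neV by force
      next
        fix p assume "p < k" "i = 2*p+2"
        then show ?thesis using i ps2 eIn neV by force
      next
        fix p assume "p < c" "i = 2*k+1+p"
        then show ?thesis using i ps3 hFin unfolding F_def by force
      qed
    qed
    show "verts D \<subseteq> \<psi> ` {1..n}"
    proof
      fix x assume x: "x \<in> verts D"
      have eimg: "e ` {0..<k} = ne" using e unfolding bij_betw_def by simp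
      have himg: "hF ` {0..<c} = F" using hF unfolding bij_betw_def by simp
      show "x \<in> \<psi> ` {1..n}"
      proof (cases "x \<in> fst ` ne")
        case True
        then obtain p where p: "p < k" "x = fst (e p)" using eimg by force
        then have "x = \<psi> (2*p+1)" using ps1 by simp
        moreover have "2*p+1 \<in> {1..n}" using p unfolding n_def by simp
        ultimately show ?thesis by blast
      next
        case False
        show ?thesis
        proof (cases "x \<in> snd ` ne")
          case True
          then obtain p where p: "p < k" "x = snd (e p)" using eimg by force
          then have "x = \<psi> (2*p+2)" using ps2 by simp
          moreover have "2*p+2 \<in> {1..n}" using p unfolding n_def using c1 by simp
          ultimately show ?thesis by blast
        next
          case False2: False
          then have "x \<in> F" using False x unfolding F_def by blast
          then obtain j where j: "j < c" "x = hF j" using himg by force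
          then have "x = \<psi> (2*k+1+j)" using ps3 by simp
          moreover have "2*k+1+j \<in> {1..n}" using j unfolding n_def by simp
          ultimately show ?thesis by blast
        qed
      qed
    qed
  qed
  have bij\<psi>: "bij_betw \<psi> {1..n} (verts D)" using inj img unfolding bij_betw_def by simp
  define \<phi> where "\<phi> = inv_into {1..n} \<psi>"
  have bij\<phi>: "bij_betw \<phi> (verts D) {1..n}" unfolding \<phi>_def by (rule bij_betw_inv_into[OF bij\<psi>])
  have edge_iff: "(\<psi> i, \<psi> j) \<in> edges D \<longleftrightarrow> \<not> (\<exists>p<k. i = 2*p + 1 \<and> j = 2*p + 2)"
    if i: "i \<in> {1..n}" and j: "j \<in> {1..n}" for i j
  proof
    assume ed: "(\<psi> i, \<psi> j) \<in> edges D"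
    show "\<not> (\<exists>p<k. i = 2*p + 1 \<and> j = 2*p + 2)"
    proof
      assume "\<exists>p<k. i = 2*p + 1 \<and> j = 2*p + 2"
      then obtain p where p: "p < k" "i = 2*p+1" "j = 2*p+2" by blast
      then have "(\<psi> i, \<psi> j) = e p" using ps1 ps2 by simp
      then have "(\<psi> i, \<psi> j) \<in> nedge D" using eIn[OF p(1)] unfolding ne_def by simp
      then show False using ed unfolding nedge_def by blast
    qed
  next
    assume nex: "\<not> (\<exists>p<k. i = 2*p + 1 \<and> j = 2*p + 2)"
    show "(\<psi> i, \<psi> j) \<in> edges D"
    proof (rule ccontr)
      assume ned: "(\<psi> i, \<psi> j) \<notin> edges D"
      have iv: "\<psi> i \<in> verts D" "\<psi> j \<in> verts D" using img i j by auto
      then have "\<psi> i \<noteq> \<psi> j" using ned fr unfolding fin_refl_digraph_def by auto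
      then have "(\<psi> i, \<psi> j) \<in> ne" unfolding ne_def nedge_def using iv ned by auto
      then obtain p where p: "p < k" "e p = (\<psi> i, \<psi> j)" using e unfolding bij_betw_def by force
      have "\<psi> i = \<psi> (2*p+1)" using ps1[OF p(1)] p(2) by simp
      moreover have "2*p+1 \<in> {1..n}" using p(1) unfolding n_def by simp
      ultimately have ii: "i = 2*p+1" using inj_onD[OF inj _ i] by blast
      have "\<psi> j = \<psi> (2*p+2)" using ps2[OF p(1)] p(2) by simp
      moreover have "2*p+2 \<in> {1..n}" using p(1) c1 unfolding n_def by simp
      ultimately have "j = 2*p+2" using inj_onD[OF inj _ j] by blast
      then show False using ii nex p(1) by blast
    qed
  qed
  have "digraph_iso D (N_digraph n k)"
    unfolding digraph_iso_def
  proof (intro exI[of _ \<phi>] conjI ballI)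
    show "bij_betw \<phi> (verts D) (verts (N_digraph n k))" using bij\<phi> N_v by simp
    fix x y assume x: "x \<in> verts D" and y: "y \<in> verts D"
    have px: "\<phi> x \<in> {1..n}" using bij_betwE[OF bij\<phi>] x by blast
    have py: "\<phi> y \<in> {1..n}" using bij_betwE[OF bij\<phi>] y by blast
    have px': "\<psi> (\<phi> x) = x" using f_inv_into_f[of x \<psi> "{1..n}"] img x unfolding \<phi>_def by simp
    have py': "\<psi> (\<phi> y) = y" using f_inv_into_f[of y \<psi> "{1..n}"] img y unfolding \<phi>_def by simp
    have "(x, y) \<in> edges D \<longleftrightarrow> \<not> (\<exists>p<k. \<phi> x = 2*p + 1 \<and> \<phi> y = 2*p + 2)"
      using edge_iff[OF px py] px' py' by simp
    also have "\<dots> \<longleftrightarrow> (\<phi> x, \<phi> y) \<in> edges (N_digraph n k)"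
      using N_e[of "\<phi> x" "\<phi> y" n k] px py by simp
    finally show "(x, y) \<in> edges D \<longleftrightarrow> (\<phi> x, \<phi> y) \<in> edges (N_digraph n k)" .
  qed
  moreover have "2*k < n" unfolding n_def using c1 by simp
  ultimately show ?thesis by blast
qed



lemma iso_hom:
  assumes "digraph_iso D (N_digraph n k)"
  shows "\<exists>\<psi>. is_surj_hom \<psi> (N_digraph n k) D"
proof -
  obtain \<phi> where b: "bij_betw \<phi> (verts D) (verts (N_digraph n k))"
    and ed: "\<forall>x\<in>verts D. \<forall>y\<in>verts D. (x, y) \<in> edges D \<longleftrightarrow> (\<phi> x, \<phi> y) \<in> edges (N_digraph n k)"
    using assms unfolding digraph_iso_def by blast
  define \<psi> where "\<psi> = inv_into (verts D) \<phi>"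
  have b2: "bij_betw \<psi> (verts (N_digraph n k)) (verts D)" unfolding \<psi>_def by (rule bij_betw_inv_into[OF b])
  have inv: "\<phi> (\<psi> i) = i" if "i \<in> verts (N_digraph n k)" for i
    unfolding \<psi>_def using that b by (simp add: bij_betw_def f_inv_into_f)
  have hom: "(\<psi> i, \<psi> j) \<in> edges D" if "(i, j) \<in> edges (N_digraph n k)" for i j
  proof -
    have ij: "i \<in> verts (N_digraph n k)" "j \<in> verts (N_digraph n k)" using that N_e N_v by auto
    then have "\<psi> i \<in> verts D" "\<psi> j \<in> verts D" using bij_betwE[OF b2] by auto
    moreover have "(\<phi> (\<psi> i), \<phi> (\<psi> j)) \<in> edges (N_digraph n k)" using that inv ij by simp
    ultimately show ?thesis using ed by blast
  qed
  have "is_surj_hom \<psi> (N_digraph n k) D"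
    unfolding is_surj_hom_def is_hom_def using b2 hom bij_betwE[OF b2] unfolding bij_betw_def by blast
  then show ?thesis by blast
qed

lemma match_hom:
  fixes E :: "nat digraph" and a b :: "nat \<Rightarrow> nat"
  assumes fr: "fin_refl_digraph E" and iso: "digraph_iso D (N_digraph n k)" and kn: "2*k < n"
    and cardE: "n \<le> card (verts E)"
    and ne: "\<And>m. m < k \<Longrightarrow> (a m, b m) \<in> nedge E"
    and ia: "inj_on a {..<k}" and ib: "inj_on b {..<k}" and dj: "a ` {..<k} \<inter> b ` {..<k} = {}"
  shows "hom_image_le D E"
proof -
  define A where "A = a ` {..<k}"
  define B where "B = b ` {..<k}"
  have finV: "finite (verts E)" using fr unfolding fin_refl_digraph_def by simp
  have AV: "A \<subseteq> verts E" "B \<subseteq> verts E" using ne unfolding A_def B_def nedge_def by auto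
  have cA: "card A = k" unfolding A_def using card_image[OF ia] by simp
  have cB: "card B = k" unfolding B_def using card_image[OF ib] by simp
  have cAB: "card (A \<union> B) = 2*k" using card_Un_disjoint[of A B] cA cB dj unfolding A_def B_def by simp
  define R where "R = verts E - (A \<union> B)"
  have cR: "card R = card (verts E) - 2*k" unfolding R_def using card_Diff_subset[of "A \<union> B" "verts E"] AV cAB
    finite_subset[OF _ finV] by (metis Un_subset_iff)
  define T where "T = {2*k+1..n}"
  have cT: "card T = n - 2*k" unfolding T_def by simp
  obtain r where r: "r ` R = T"
    using surj_exists[of R T] finV cR cT cardE kn unfolding R_def T_def by force
  define h where "h x = (if x \<in> A then 2 * inv_into {..<k} a x + 1
     else if x \<in> B then 2 * inv_into {..<k} b x + 2 else r x)" for x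
  have ha: "h (a m) = 2*m + 1" if "m < k" for m
    unfolding h_def A_def using that ia by (simp add: inv_into_f_f)
  have hb: "h (b m) = 2*m + 2" if "m < k" for m
  proof -
    have "b m \<notin> A" using dj that unfolding A_def by blast
    moreover have "b m \<in> B" using that unfolding B_def by simp
    ultimately show ?thesis unfolding h_def using that ib by (simp add: inv_into_f_f)
  qed
  have hr: "h x = r x" if "x \<in> R" for x using that unfolding h_def R_def by simp
  have rT: "r x \<in> T" if "x \<in> R" for x using r that by blast
  have cases3: "(\<exists>m<k. x = a m) \<or> (\<exists>m<k. x = b m) \<or> x \<in> R" if "x \<in> verts E" for x
    using that unfolding R_def A_def B_def by blast
  have hin: "h x \<in> {1..n}" if "x \<in> verts E" for x
    using cases3[OF that]
  proof (elim disjE exE conjE)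
    fix m assume "m < k" "x = a m" then show ?thesis using ha kn by simp
  next
    fix m assume "m < k" "x = b m" then show ?thesis using hb kn by simp
  next
    assume "x \<in> R" then show ?thesis using hr rT unfolding T_def by force
  qed
  have himg: "{1..n} \<subseteq> h ` verts E"
  proof
    fix i assume i: "i \<in> {1..n}"
    show "i \<in> h ` verts E"
    proof (cases "i \<le> 2*k")
      case True
      have "1 \<le> i" using i by simp
      show ?thesis
      proof (cases "odd i")
        case True
        then obtain p where p: "i = 2*p + 1" by (elim oddE) simp
        then have pk: "p < k" using \<open>i \<le> 2*k\<close> by simp
        then have "h (a p) = i" using ha p by simp
        moreover have "a p \<in> verts E" using AV pk unfolding A_def by blast
        ultimately show ?thesis by blast
      next
        case False
        then have "even i" by simp
        then obtain q where q: "i = 2*q" by (rule evenE)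
        then have qq: "i = 2*(q - 1) + 2" "q - 1 < k" using \<open>1 \<le> i\<close> \<open>i \<le> 2*k\<close> by auto
        then have "h (b (q - 1)) = i" using hb by simp
        moreover have "b (q - 1) \<in> verts E" using AV qq(2) unfolding B_def by blast
        ultimately show ?thesis by blast
      qed
    next
      case False
      then have "i \<in> T" using i unfolding T_def by simp
      then obtain x where x: "x \<in> R" "r x = i" using r by blast
      then have "h x = i" using hr by simp
      moreover have "x \<in> verts E" using x unfolding R_def by simp
      ultimately show ?thesis by blast
    qed
  qed
  have hom: "(h x, h y) \<in> edges (N_digraph n k)" if xy: "(x, y) \<in> edges E" for x y
  proof -
    have xv: "x \<in> verts E" "y \<in> verts E" using xy fr unfolding fin_refl_digraph_def by auto
    have "\<not> (\<exists>p<k. h x = 2*p + 1 \<and> h y = 2*p + 2)"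
    proof
      assume "\<exists>p<k. h x = 2*p + 1 \<and> h y = 2*p + 2"
      then obtain p where p: "p < k" "h x = 2*p+1" "h y = 2*p+2" by blast
      have "x = a p"
        using cases3[OF xv(1)]
      proof (elim disjE exE conjE)
        fix m assume "m < k" "x = a m" then show ?thesis using ha p by simp
      next
        fix m assume "m < k" "x = b m" then show ?thesis using hb p by presburger
      next
        assume "x \<in> R" then show ?thesis using hr rT p unfolding T_def by force
      qed
      moreover have "y = b p"
        using cases3[OF xv(2)]
      proof (elim disjE exE conjE)
        fix m assume "m < k" "y = a m" then show ?thesis using ha p by presburger
      next
        fix m assume "m < k" "y = b m" then show ?thesis using hb p by simp
      next
        assume "y \<in> R" then show ?thesis using hr rT p unfolding T_def by force
      qed
      ultimately have "(x, y) \<in> nedge E" using ne[OF p(1)] by simp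
      then show False using xy unfolding nedge_def by blast
    qed
    then show ?thesis using N_e hin xv by simp
  qed
  have "is_surj_hom h E (N_digraph n k)"
    unfolding is_surj_hom_def is_hom_def N_v using hin himg hom by blast
  moreover obtain \<psi> where "is_surj_hom \<psi> (N_digraph n k) D" using iso_hom[OF iso] by blast
  ultimately have "is_surj_hom (\<psi> \<circ> h) E D" by (rule surj_hom_comp)
  then show ?thesis unfolding hom_image_le_def by blast
qed



definition LL :: "nat \<Rightarrow> (nat + (nat set \<times> nat set)) set" where
  "LL n = Inl ` {0..<n} \<union> Inr ` (Pow {0..<n} \<times> Pow {0..<n})"

lemma LL_finite: "finite (LL n)" unfolding LL_def by simp

definition hm :: "nat digraph \<Rightarrow> nat \<Rightarrow> bool" where
  "hm E j \<longleftrightarrow> (\<exists>a b :: nat \<Rightarrow> nat. (\<forall>m<j. (a m, b m) \<in> nedge E) \<and> inj_on a {..<j} \<and> inj_on b {..<j}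
      \<and> a ` {..<j} \<inter> b ` {..<j} = {})"

lemma hm_bound:
  assumes "finite (verts E)" "hm E j"
  shows "j \<le> card (verts E)"
proof -
  obtain a b :: "nat \<Rightarrow> nat" where ab: "\<forall>m<j. (a m, b m) \<in> nedge E" "inj_on a {..<j}"
    using assms(2) unfolding hm_def by blast
  have "a ` {..<j} \<subseteq> verts E" using ab(1) unfolding nedge_def by auto
  from card_inj_on_le[OF ab(2) this assms(1)] show ?thesis by simp
qed

lemma label_small:
  fixes E :: "nat digraph"
  assumes fr: "fin_refl_digraph E" and sm: "card (verts E) < n"
  shows "\<exists>\<tau>::nat \<Rightarrow> nat + (nat set \<times> nat set). \<tau> ` verts E \<subseteq> LL n \<and> consistent E \<tau>"
proof -
  have finV: "finite (verts E)" using fr unfolding fin_refl_digraph_def by simp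
  obtain idx where idx: "bij_betw idx (verts E) {0..<card (verts E)}" using ex_bij_betw_finite_nat[OF finV] by blast
  define \<tau> where "\<tau> x = (Inl (idx x) :: nat + (nat set \<times> nat set))" for x
  have "\<tau> ` verts E \<subseteq> LL n" unfolding \<tau>_def LL_def using bij_betwE[OF idx] sm by force
  moreover have "consistent E \<tau>" unfolding consistent_def
  proof (intro ballI impI)
    fix x y x' y' assume v: "x \<in> verts E" "y \<in> verts E" "x' \<in> verts E" "y' \<in> verts E"
      and eq: "\<tau> x = \<tau> x'" "\<tau> y = \<tau> y'"
    have "x = x'" using eq(1) v(1,3) idx unfolding \<tau>_def bij_betw_def inj_on_def by simp
    moreover have "y = y'" using eq(2) v(2,4) idx unfolding \<tau>_def bij_betw_def inj_on_def by simp
    ultimately show "(x, y) \<in> edges E \<longleftrightarrow> (x', y') \<in> edges E" by simp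
  qed
  ultimately show ?thesis by blast
qed

lemma label_cover:
  fixes E :: "nat digraph" and C :: "nat set"
  assumes fr: "fin_refl_digraph E" and fC: "finite C" and cC: "card C < n"
    and cover: "\<And>x y. (x, y) \<in> nedge E \<Longrightarrow> x \<in> C \<or> y \<in> C"
  shows "\<exists>\<tau>::nat \<Rightarrow> nat + (nat set \<times> nat set). \<tau> ` verts E \<subseteq> LL n \<and> consistent E \<tau>"
proof -
  obtain idx where idx: "bij_betw idx C {0..<card C}" using ex_bij_betw_finite_nat[OF fC] by blast
  have iinj: "c = c'" if "c \<in> C" "c' \<in> C" "idx c = idx c'" for c c'
    using idx that unfolding bij_betw_def inj_on_def by blast
  have ilt: "idx c < n" if "c \<in> C" for c using bij_betwE[OF idx] that cC by force
  define As where "As x = idx ` {c \<in> C. (x, c) \<notin> edges E}" for x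
  define Bs where "Bs x = idx ` {c \<in> C. (c, x) \<notin> edges E}" for x
  have Asm: "idx c \<in> As x \<longleftrightarrow> (x, c) \<notin> edges E" if "c \<in> C" for c x
    unfolding As_def using iinj that by blast
  have Bsm: "idx c \<in> Bs x \<longleftrightarrow> (c, x) \<notin> edges E" if "c \<in> C" for c x
    unfolding Bs_def using iinj that by blast
  define \<tau> where "\<tau> x = (if x \<in> C then Inl (idx x) else Inr (As x, Bs x) :: nat + (nat set \<times> nat set))" for x
  have "\<tau> ` verts E \<subseteq> LL n"
  proof
    fix l assume "l \<in> \<tau> ` verts E"
    then obtain x where x: "l = \<tau> x" by blast
    show "l \<in> LL n"
    proof (cases "x \<in> C")
      case True then show ?thesis using x ilt unfolding \<tau>_def LL_def by simp
    next
      case False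
      have "As x \<subseteq> {0..<n}" "Bs x \<subseteq> {0..<n}" unfolding As_def Bs_def using ilt by auto
      then show ?thesis using x False unfolding \<tau>_def LL_def by auto
    qed
  qed
  moreover have "consistent E \<tau>" unfolding consistent_def
  proof (intro ballI impI)
    fix x y x' y' assume v: "x \<in> verts E" "y \<in> verts E" "x' \<in> verts E" "y' \<in> verts E"
      and ne: "x \<noteq> y" "x' \<noteq> y'" and eq: "\<tau> x = \<tau> x'" "\<tau> y = \<tau> y'"
    have tc: "(u \<in> C) = (u' \<in> C)" "u \<in> C \<Longrightarrow> u = u'" "u \<notin> C \<Longrightarrow> As u = As u' \<and> Bs u = Bs u'"
      if "\<tau> u = \<tau> u'" for u u'
      using that iinj unfolding \<tau>_def by (auto split: if_splits)
    have nc: "(u, w) \<in> edges E" if "u \<in> verts E" "w \<in> verts E" "u \<noteq> w" "u \<notin> C" "w \<notin> C" for u w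
    proof (rule ccontr)
      assume "(u, w) \<notin> edges E"
      then have "(u, w) \<in> nedge E" using that unfolding nedge_def by blast
      then show False using cover that by blast
    qed
    show "(x, y) \<in> edges E \<longleftrightarrow> (x', y') \<in> edges E"
    proof (cases "x \<in> C")
      case xC: True
      then have xx: "x = x'" using tc(2)[OF eq(1)] by simp
      show ?thesis
      proof (cases "y \<in> C")
        case True
        then have "y = y'" using tc(2)[OF eq(2)] by simp
        then show ?thesis using xx by simp
      next
        case False
        then have "Bs y = Bs y'" using tc(3)[OF eq(2)] by simp
        then show ?thesis using Bsm[OF xC, of y] Bsm[OF xC, of y'] xx by simp
      qed
    next
      case xC: False
      then have x'C: "x' \<notin> C" using tc(1)[OF eq(1)] by simp
      have As: "As x = As x'" using tc(3)[OF eq(1)] xC by simp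
      show ?thesis
      proof (cases "y \<in> C")
        case True
        then have "y = y'" using tc(2)[OF eq(2)] by simp
        then show ?thesis using Asm[OF True, of x] Asm[OF True, of x'] As by simp
      next
        case False
        then have "y' \<notin> C" using tc(1)[OF eq(2)] by simp
        then show ?thesis using nc[of x y] nc[of x' y'] v ne xC x'C False by simp
      qed
    qed
  qed
  ultimately show ?thesis by blast
qed



lemma hm_D:
  assumes "hm E j"
  obtains a b :: "nat \<Rightarrow> nat" where "\<forall>m<j. (a m, b m) \<in> nedge E" "inj_on a {..<j}" "inj_on b {..<j}"
      "a ` {..<j} \<inter> b ` {..<j} = {}"
  using assms unfolding hm_def by blast

lemma label_exists:
  fixes E :: "nat digraph"
  assumes iso: "digraph_iso D (N_digraph n k)" and kn: "2*k < n" and EA: "E \<in> Av D"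
  shows "\<exists>\<tau>::nat \<Rightarrow> nat + (nat set \<times> nat set). \<tau> ` verts E \<subseteq> LL n \<and> consistent E \<tau>"
proof -
  have fr: "fin_refl_digraph E" and nle: "\<not> hom_image_le D E" using EA unfolding Av_def DR_def by auto
  have finV: "finite (verts E)" using fr unfolding fin_refl_digraph_def by simp
  show ?thesis
  proof (cases "card (verts E) < n")
    case True then show ?thesis using label_small[OF fr] by blast
  next
    case False
    then have big: "n \<le> card (verts E)" by simp
    define J where "J = {j. hm E j}"
    have Jsub: "J \<subseteq> {..card (verts E)}" unfolding J_def using hm_bound[OF finV] by auto
    have fJ: "finite J" using finite_subset[OF Jsub] by simp
    have "hm E 0" unfolding hm_def by simp
    then have J0: "0 \<in> J" unfolding J_def by simp
    define j0 where "j0 = Max J"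
    have hj0: "hm E j0" using Max_in[OF fJ] J0 unfolding j0_def J_def by blast
    have jmax: "j \<le> j0" if "hm E j" for j using Max_ge[OF fJ] that unfolding j0_def J_def by blast
    obtain a b :: "nat \<Rightarrow> nat" where ab: "\<forall>m<j0. (a m, b m) \<in> nedge E" "inj_on a {..<j0}" "inj_on b {..<j0}"
        "a ` {..<j0} \<inter> b ` {..<j0} = {}"
      by (rule hm_D[OF hj0])
    show ?thesis
    proof (cases "k \<le> j0")
      case True
      have sub: "{..<k} \<subseteq> {..<j0}" using True by auto
      have "hom_image_le D E"
      proof (rule match_hom[OF fr iso kn big, where a = a and b = b])
        show "(a m, b m) \<in> nedge E" if "m < k" for m
        proof -
          have "m < j0" using that True by simp
          then show ?thesis using ab(1) by blast
        qed
        show "inj_on a {..<k}" using inj_on_subset[OF ab(2) sub] .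
        show "inj_on b {..<k}" using inj_on_subset[OF ab(3) sub] .
        have "a ` {..<k} \<subseteq> a ` {..<j0}" "b ` {..<k} \<subseteq> b ` {..<j0}" using sub by (simp_all add: image_mono)
        then show "a ` {..<k} \<inter> b ` {..<k} = {}" using ab(4) by blast
      qed
      then show ?thesis using nle by simp
    next
      case False
      define C where "C = a ` {..<j0} \<union> b ` {..<j0}"
      have fC: "finite C" unfolding C_def by simp
      have "card C \<le> card (a ` {..<j0}) + card (b ` {..<j0})" unfolding C_def by (rule card_Un_le)
      also have "\<dots> \<le> j0 + j0" using card_image_le[of "{..<j0}" a] card_image_le[of "{..<j0}" b] by simp
      finally have cC: "card C < n" using False kn by simp
      have cover: "x \<in> C \<or> y \<in> C" if xy: "(x, y) \<in> nedge E" for x y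
      proof (rule ccontr)
        assume "\<not> (x \<in> C \<or> y \<in> C)"
        then have xa: "x \<notin> a ` {..<j0}" "x \<notin> b ` {..<j0}" "y \<notin> a ` {..<j0}" "y \<notin> b ` {..<j0}"
          unfolding C_def by auto
        have xy': "x \<noteq> y" using xy unfolding nedge_def by simp
        define a' where "a' = a(j0 := x)"
        define b' where "b' = b(j0 := y)"
        have L: "{..<Suc j0} = insert j0 {..<j0}" by auto
        have ia: "a' ` {..<j0} = a ` {..<j0}" "b' ` {..<j0} = b ` {..<j0}" unfolding a'_def b'_def by auto
        have f1: "\<forall>m<Suc j0. (a' m, b' m) \<in> nedge E"
        proof (intro allI impI)
          fix m assume "m < Suc j0"
          then show "(a' m, b' m) \<in> nedge E" using ab(1) xy unfolding a'_def b'_def by (cases "m = j0") auto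
        qed
        have f2: "inj_on a' {..<Suc j0}"
        proof -
          have "inj_on a' {..<j0}" using ab(2) unfolding a'_def inj_on_def by auto
          moreover have "a' j0 \<notin> a' ` {..<j0}" using xa ia unfolding a'_def by simp
          ultimately show ?thesis unfolding L by simp
        qed
        have f3: "inj_on b' {..<Suc j0}"
        proof -
          have "inj_on b' {..<j0}" using ab(3) unfolding b'_def inj_on_def by auto
          moreover have "b' j0 \<notin> b' ` {..<j0}" using xa ia unfolding b'_def by simp
          ultimately show ?thesis unfolding L by simp
        qed
        have f4: "a' ` {..<Suc j0} \<inter> b' ` {..<Suc j0} = {}"
        proof -
          have "a' ` {..<Suc j0} = insert x (a ` {..<j0})" unfolding L image_insert ia(1) by (simp add: a'_def)
          moreover have "b' ` {..<Suc j0} = insert y (b ` {..<j0})" unfolding L image_insert ia(2) by (simp add: b'_def)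
          ultimately show ?thesis using ab(4) xa xy' by auto
        qed
        have "hm E (Suc j0)" unfolding hm_def
          by (rule exI[of _ a'], rule exI[of _ b'], intro conjI f1 f2 f3 f4)
        from jmax[OF this] show False by simp
      qed
      show ?thesis by (rule label_cover[OF fr fC cC cover])
    qed
  qed
qed



theorem theorem4p6:
  fixes D :: "'a digraph"
  assumes "fin_refl_digraph D"
  shows "wqo_class hom_image_le (Av D) \<longleftrightarrow>
           (\<exists>n k. 2 * k < n \<and> digraph_iso D (N_digraph n k))"
proof
  assume w: "wqo_class hom_image_le (Av D)"
  show "\<exists>n k. 2 * k < n \<and> digraph_iso D (N_digraph n k)"
  proof (rule ccontr)
    assume nex: "\<not> (\<exists>n k. 2 * k < n \<and> digraph_iso D (N_digraph n k))"
    consider (A) "\<forall>x\<in>verts D. \<exists>y. (x, y) \<in> nedge D \<or> (y, x) \<in> nedge D"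
      | (B1) "\<exists>x y z. (x, y) \<in> nedge D \<and> (x, z) \<in> nedge D \<and> y \<noteq> z"
      | (B2) "\<exists>x y z. (y, x) \<in> nedge D \<and> (z, x) \<in> nedge D \<and> y \<noteq> z"
      | (Cc) "\<exists>x y z. (x, y) \<in> nedge D \<and> (y, z) \<in> nedge D"
      | (ok) "\<exists>x\<in>verts D. \<forall>y. (x, y) \<notin> nedge D \<and> (y, x) \<notin> nedge D"
        "\<not> (\<exists>x y z. (x, y) \<in> nedge D \<and> (x, z) \<in> nedge D \<and> y \<noteq> z)"
        "\<not> (\<exists>x y z. (y, x) \<in> nedge D \<and> (z, x) \<in> nedge D \<and> y \<noteq> z)"
        "\<not> (\<exists>x y z. (x, y) \<in> nedge D \<and> (y, z) \<in> nedge D)"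
      by blast
    then show False
    proof cases
      case A
      then have "\<not> wqo_class hom_image_le (Av D)" by (intro not_wqo_P disjI1)
      then show False using w by simp
    next
      case B1
      then have "\<not> wqo_class hom_image_le (Av D)" by (intro not_wqo_P disjI2 disjI1)
      then show False using w by simp
    next
      case B2
      then have "\<not> wqo_class hom_image_le (Av D)" by (intro not_wqo_P disjI2)
      then show False using w by simp
    next
      case Cc
      then obtain x y z where "(x, y) \<in> nedge D" "(y, z) \<in> nedge D" by blast
      then have "\<not> wqo_class hom_image_le (Av D)" by (rule not_wqo_Q)
      then show False using w by simp
    next
      case ok
      have nB1: "y = z" if "(x, y) \<in> nedge D" "(x, z) \<in> nedge D" for x y z using ok(2) that by blast
      have nB2: "y = z" if "(y, x) \<in> nedge D" "(z, x) \<in> nedge D" for x y z using ok(3) that by blast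
      have nC: "(y, z) \<notin> nedge D" if "(x, y) \<in> nedge D" for x y z using ok(4) that by blast
      have "\<exists>n k. 2 * k < n \<and> digraph_iso D (N_digraph n k)"
        by (rule iso_N[OF assms ok(1) nB1 nB2 nC])
      then show False using nex by simp
    qed
  qed
next
  assume "\<exists>n k. 2 * k < n \<and> digraph_iso D (N_digraph n k)"
  then obtain n k where kn: "2 * k < n" and iso: "digraph_iso D (N_digraph n k)" by blast
  show "wqo_class hom_image_le (Av D)"
  proof (rule good_imp_wqo)
    fix s :: "nat \<Rightarrow> nat digraph" assume s: "\<forall>i. s i \<in> Av D"
    have ex: "\<forall>i. \<exists>\<tau>::nat \<Rightarrow> nat + (nat set \<times> nat set). \<tau> ` verts (s i) \<subseteq> LL n \<and> consistent (s i) \<tau>"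
      using label_exists[OF iso kn] s by blast
    obtain \<tau> :: "nat \<Rightarrow> nat \<Rightarrow> nat + (nat set \<times> nat set)"
      where \<tau>: "\<forall>i. \<tau> i ` verts (s i) \<subseteq> LL n \<and> consistent (s i) (\<tau> i)"
      using choice[OF ex] by blast
    have fr: "fin_refl_digraph (s i)" for i using s unfolding Av_def DR_def by blast
    show "\<exists>i j. i < j \<and> hom_image_le (s i) (s j)"
      by (rule good_labels[OF LL_finite fr, of \<tau>]) (use \<tau> in blast)+
  qed
qed


end
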